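(* Let $P,Q\in W^{(l)}\setminus\{0\}$. (1) If $w(P)$ and $w(Q)$ are not aligned, then $[P,Q]\neq0$ and $w([P,Q])=w(P)+w(Q)-(1,1)$. (2) If $\overline w(P)$ and $\overline w(Q)$ are not aligned, then $[P,Q]\ne0$ and $\overline w([P,Q])=\overline w(P)+\overline w(Q)-(1,1)$.
   Context: $K$ is a field of characteristic zero, $l\in\mathbb{N}$. $W^{(l)}$ is the associative $K$-algebra with $K$-basis $\{X^{i/l}Y^j:i\in\mathbb{Z},j\in\mathbb{N}_0\}$, powers of $X$ multiplying as Laurent monomials and $[Y,X^\alpha]=\alpha X^{\alpha-1}$ for $\alpha\in\frac1l\mathbb{Z}$. $\mathrm{Supp}(P)$ is the set of $(i/l,j)$ such that $X^{i/l}Y^j$ has nonzero coefficient in $P$. $w(P)$: among the points $(a,b)\in\mathrm{Supp}(P)$ maximizing $a-b$, the one with largest $a$; $\overline w(P)$: among the points maximizing $b-a$, the one with largest $b$. Two vectors $(a_1,a_2),(b_1,b_2)$ are aligned if $a_1b_2-a_2b_1=0$. *)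

theory Defs
  imports Complex_Main
begin

text \<open>Elements of W^(l) over a field K of characteristic zero are represented by their
coefficient functions: P (i,j) is the coefficient of the basis monomial X^(i/l) Y^j
(i an integer, j a natural number).\<close>

type_synonym 'k wl = "int \<times> nat \<Rightarrow> 'k"

definition wl_elem :: "'k::zero wl \<Rightarrow> bool" where
  "wl_elem P \<longleftrightarrow> finite {k. P k \<noteq> 0}"

definition wl_supp_idx :: "'k::zero wl \<Rightarrow> (int \<times> nat) set" where
  "wl_supp_idx P = {k. P k \<noteq> 0}"

definition ffact_wl :: "nat \<Rightarrow> int \<Rightarrow> nat \<Rightarrow> 'k::field_char_0" where
  "ffact_wl l i t = (\<Prod>s<t. (of_int i / of_nat l - of_nat s))"

text \<open>Normal-ordering rule: since Y acts as d/dX, we have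
  Y^j X^beta = sum_t (j choose t) beta(beta-1)...(beta-t+1) X^(beta-t) Y^(j-t).
  Hence (X^(i1/l) Y^j1)(X^(i2/l) Y^j2) =
  sum_{t=0}^{j1} (j1 choose t) ff(i2/l,t) X^((i1+i2-t l)/l) Y^(j1+j2-t).
  basis_mul l a b c is the coefficient of basis monomial c in the product a*b.\<close>
definition basis_mul :: "nat \<Rightarrow> int \<times> nat \<Rightarrow> int \<times> nat \<Rightarrow> int \<times> nat \<Rightarrow> 'k::field_char_0" where
  "basis_mul l a b c =
     (let (i1, j1) = a; (i2, j2) = b; (i, j) = c in
      if j \<le> j1 + j2 \<and> j1 + j2 - j \<le> j1
         \<and> i = i1 + i2 - int ((j1 + j2 - j) * l)
      then of_nat (j1 choose (j1 + j2 - j)) * ffact_wl l i2 (j1 + j2 - j)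
      else 0)"

definition wl_mult :: "nat \<Rightarrow> 'k::field_char_0 wl \<Rightarrow> 'k wl \<Rightarrow> 'k wl" where
  "wl_mult l P Q = (\<lambda>c. \<Sum>a\<in>wl_supp_idx P. \<Sum>b\<in>wl_supp_idx Q. P a * Q b * basis_mul l a b c)"

definition wl_comm :: "nat \<Rightarrow> 'k::field_char_0 wl \<Rightarrow> 'k wl \<Rightarrow> 'k wl" where
  "wl_comm l P Q = (\<lambda>c. wl_mult l P Q c - wl_mult l Q P c)"

definition Supp :: "nat \<Rightarrow> 'k::zero wl \<Rightarrow> (rat \<times> rat) set" where
  "Supp l P = {(of_int i / of_nat l, of_nat j) | i j. P (i, j) \<noteq> 0}"

definition wdir :: "nat \<Rightarrow> 'k::zero wl \<Rightarrow> rat \<times> rat" where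
  "wdir l P = (THE p. p \<in> Supp l P
      \<and> (\<forall>q\<in>Supp l P. fst q - snd q \<le> fst p - snd p)
      \<and> (\<forall>q\<in>Supp l P. fst q - snd q = fst p - snd p \<longrightarrow> fst q \<le> fst p))"

definition wbar :: "nat \<Rightarrow> 'k::zero wl \<Rightarrow> rat \<times> rat" where
  "wbar l P = (THE p. p \<in> Supp l P
      \<and> (\<forall>q\<in>Supp l P. snd q - fst q \<le> snd p - fst p)
      \<and> (\<forall>q\<in>Supp l P. snd q - fst q = snd p - fst p \<longrightarrow> snd q \<le> snd p))"

definition aligned :: "rat \<times> rat \<Rightarrow> rat \<times> rat \<Rightarrow> bool" where
  "aligned a b \<longleftrightarrow> fst a * snd b - snd a * fst b = 0"

end

theory Submission
  imports Defs
begin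

definition wt :: "nat \<Rightarrow> int \<times> nat \<Rightarrow> int" where
  "wt l k = fst k - int (snd k) * int l"

definition lead :: "int \<Rightarrow> nat \<Rightarrow> 'k::zero wl \<Rightarrow> int \<times> nat \<Rightarrow> bool" where
  "lead s l P k \<longleftrightarrow> P k \<noteq> 0 \<and> (\<forall>k'. P k' \<noteq> 0 \<longrightarrow> s * wt l k' \<le> s * wt l k \<and> (wt l k' = wt l k \<longrightarrow> fst k' \<le> fst k))"

lemma bm_nz:
  assumes "basis_mul l a b c \<noteq> (0::'k::field_char_0)"
  shows "snd c \<le> snd a + snd b \<and> snd a + snd b - snd c \<le> snd a \<and> fst c = fst a + fst b - int ((snd a + snd b - snd c) * l)"
  using assms by (cases a; cases b; cases c) (auto simp: basis_mul_def Let_def split: if_splits)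

lemma bm_0: "basis_mul l a b (fst a + fst b, snd a + snd b) = (1::'k::field_char_0)"
  by (cases a; cases b) (simp add: basis_mul_def ffact_wl_def)

lemma bm_1: assumes "snd a + snd b \<ge> 1"
  shows "basis_mul l a b (fst a + fst b - int l, snd a + snd b - 1) = (of_nat (snd a) * (of_int (fst b) / of_nat l) :: 'k::field_char_0)"
  using assms by (cases a; cases b) (auto simp: basis_mul_def ffact_wl_def Let_def)

lemma D_nz:
  assumes "basis_mul l a b c - basis_mul l b a c \<noteq> (0::'k::field_char_0)"
  shows "wt l c = wt l a + wt l b \<and> fst c \<le> fst a + fst b - int l"
proof -
  have "basis_mul l a b c \<noteq> (0::'k) \<or> basis_mul l b a c \<noteq> (0::'k)" using assms by auto
  then have h: "snd c \<le> snd a + snd b \<and> fst c = fst a + fst b - int ((snd a + snd b - snd c) * l)"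
    using bm_nz[of l a b c] bm_nz[of l b a c] by (auto simp: add.commute)
  have "snd c \<noteq> snd a + snd b"
  proof
    assume e: "snd c = snd a + snd b"
    then have "c = (fst a + fst b, snd a + snd b)" using h by (cases c) auto
    then show False using assms bm_0[of l a b, where 'k='k] bm_0[of l b a, where 'k='k] by (simp add: add.commute)
  qed
  then have t1: "snd a + snd b - snd c \<ge> 1" using h by linarith
  have i: "int (snd a + snd b - snd c) = int (snd a) + int (snd b) - int (snd c)" using h by (simp add: of_nat_diff)
  have "l \<le> (snd a + snd b - snd c) * l" using t1 by (metis mult_1 mult_le_mono1)
  hence "int l \<le> int ((snd a + snd b - snd c) * l)" by (simp only: of_nat_le_iff)
  moreover have fc: "fst c = fst a + fst b - (int (snd a) + int (snd b) - int (snd c)) * int l"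
    using h i by (simp only: of_nat_mult)
  ultimately have ineq: "int l \<le> (int (snd a) + int (snd b) - int (snd c)) * int l"
    using i by (simp only: of_nat_mult)
  have "wt l c = wt l a + wt l b" using fc by (simp add: wt_def algebra_simps)
  moreover have "fst c \<le> fst a + fst b - int l" using fc ineq by linarith
  ultimately show ?thesis by simp
qed

lemma comm_expand:
  "wl_comm l P Q c = (\<Sum>a\<in>wl_supp_idx P. \<Sum>b\<in>wl_supp_idx Q. P a * Q b * (basis_mul l a b c - basis_mul l b a c))"
proof -
  have "wl_mult l Q P c = (\<Sum>a\<in>wl_supp_idx P. \<Sum>b\<in>wl_supp_idx Q. P a * Q b * basis_mul l b a c)"
    unfolding wl_mult_def by (subst sum.swap) (simp add: ac_simps)
  then show ?thesis unfolding wl_comm_def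
    by (simp add: wl_mult_def sum_subtractf right_diff_distrib)
qed
lemma exists_lead:
  fixes P :: "'k::zero wl"
  assumes fin: "finite {k. P k \<noteq> 0}" and ne: "P \<noteq> (\<lambda>_. 0)"
  shows "\<exists>k. lead s l P k"
proof -
  define S where "S = {k. P k \<noteq> 0}"
  have fS: "finite S" and neS: "S \<noteq> {}" using fin ne by (auto simp: S_def)
  define m where "m = Max ((\<lambda>k. s * wt l k) ` S)"
  define T where "T = {k\<in>S. s * wt l k = m}"
  have fT: "finite T" using fS by (simp add: T_def)
  have "m \<in> (\<lambda>k. s * wt l k) ` S" unfolding m_def using fS neS by (intro Max_in) auto
  then have neT: "T \<noteq> {}" by (auto simp: T_def)
  define M where "M = Max (fst ` T)"
  have "M \<in> fst ` T" unfolding M_def using fT neT by (intro Max_in) auto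
  then obtain k where kT: "k \<in> T" and kM: "fst k = M" by auto
  have "lead s l P k" unfolding lead_def
  proof (intro conjI allI impI)
    show "P k \<noteq> 0" using kT by (simp add: T_def S_def)
  next
    fix k' assume "P k' \<noteq> 0"
    then have k'S: "k' \<in> S" by (simp add: S_def)
    then have "s * wt l k' \<le> m" unfolding m_def using fS by (intro Max_ge) auto
    then show "s * wt l k' \<le> s * wt l k" using kT by (simp add: T_def)
  next
    fix k' assume "P k' \<noteq> 0" and e: "wt l k' = wt l k"
    then have "k' \<in> T" using kT by (simp add: S_def T_def)
    then have "fst k' \<le> M" unfolding M_def using fT by (intro Max_ge) auto
    then show "fst k' \<le> fst k" using kM by simp
  qed
  then show ?thesis by blast
qed

lemma comm_lead:
  fixes P Q :: "'k::field_char_0 wl"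
  assumes l: "l > 0" and s: "s = 1 \<or> s = -1"
    and fP: "finite (wl_supp_idx P)" and fQ: "finite (wl_supp_idx Q)"
    and p: "lead s l P p" and q: "lead s l Q q"
    and na: "int (snd p) * fst q \<noteq> int (snd q) * fst p"
  shows "snd p + snd q \<ge> 1 \<and> lead s l (wl_comm l P Q) (fst p + fst q - int l, snd p + snd q - 1)"
proof -
  define c0 where "c0 = (fst p + fst q - int l, snd p + snd q - 1)"
  define D where "D = (\<lambda>a b c. basis_mul l a b c - basis_mul l b a c :: 'k)"
  have sp: "snd p + snd q \<ge> 1" using na by (cases "snd p + snd q = 0") auto
  have wc0: "wt l c0 = wt l p + wt l q" using sp
    by (simp add: c0_def wt_def of_nat_diff algebra_simps)
  have Pp: "P p \<noteq> 0" and Qq: "Q q \<noteq> 0" using p q by (auto simp: lead_def)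
  have key: "s * wt l c \<le> s * wt l c0 \<and> (wt l c = wt l c0 \<longrightarrow> fst c \<le> fst c0 \<and> (fst c = fst c0 \<longrightarrow> a = p \<and> b = q))"
    if Pa: "P a \<noteq> 0" and Qb: "Q b \<noteq> 0" and Dn: "D a b c \<noteq> 0" for a b c
  proof -
    have h: "wt l c = wt l a + wt l b" "fst c \<le> fst a + fst b - int l"
      using D_nz[of l a b c] Dn by (auto simp: D_def)
    have pa: "s * wt l a \<le> s * wt l p \<and> (wt l a = wt l p \<longrightarrow> fst a \<le> fst p)"
      using p Pa unfolding lead_def by blast
    have qb: "s * wt l b \<le> s * wt l q \<and> (wt l b = wt l q \<longrightarrow> fst b \<le> fst q)"
      using q Qb unfolding lead_def by blast
    have pae: "wt l a = wt l p \<longrightarrow> fst a \<le> fst p" using pa by blast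
    have qbe: "wt l b = wt l q \<longrightarrow> fst b \<le> fst q" using qb by blast
    have pa: "s * wt l a \<le> s * wt l p" using pa by blast
    have qb: "s * wt l b \<le> s * wt l q" using qb by blast
    have 1: "s * wt l c \<le> s * wt l c0" using h(1) wc0 pa qb by (simp add: distrib_left)
    have 2: "fst c \<le> fst c0 \<and> (fst c = fst c0 \<longrightarrow> a = p \<and> b = q)" if e: "wt l c = wt l c0"
    proof -
      have "wt l a = wt l p \<and> wt l b = wt l q" using s h(1) wc0 pa qb e by auto
      then have ea: "wt l a = wt l p" and eb: "wt l b = wt l q" by auto
      then have fa: "fst a \<le> fst p" and fb: "fst b \<le> fst q" using pae qbe by auto
      have "fst c \<le> fst c0" using h(2) fa fb by (simp add: c0_def)
      moreover have "a = p \<and> b = q" if "fst c = fst c0"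
      proof -
        have "fst a = fst p" "fst b = fst q" using that h(2) fa fb by (auto simp: c0_def)
        moreover have "int (snd a) * int l = int (snd p) * int l" "int (snd b) * int l = int (snd q) * int l"
          using ea eb calculation by (auto simp: wt_def)
        then have "snd a = snd p" "snd b = snd q" using l by auto
        ultimately show ?thesis by (simp add: prod_eq_iff)
      qed
      ultimately show ?thesis by blast
    qed
    show ?thesis using 1 2 by blast
  qed
  have Dpq: "D p q c0 = (of_int (int (snd p) * fst q - int (snd q) * fst p) / of_nat l)"
  proof -
    have e1: "basis_mul l p q c0 = (of_nat (snd p) * (of_int (fst q) / of_nat l) :: 'k)"
      using bm_1[of p q l, where 'k='k] sp by (simp add: c0_def)
    have e2: "basis_mul l q p c0 = (of_nat (snd q) * (of_int (fst p) / of_nat l) :: 'k)"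
      using bm_1[of q p l, where 'k='k] sp by (simp add: c0_def add.commute)
    show ?thesis by (simp add: D_def e1 e2 diff_divide_distrib times_divide_eq_right mult.commute)
  qed
  have nz: "(of_int (int (snd p) * fst q - int (snd q) * fst p) :: 'k) \<noteq> 0"
    using na by (subst of_int_eq_0_iff) simp
  have lz: "(of_nat l :: 'k) \<noteq> 0" using l by simp
  have Dpq0: "D p q c0 \<noteq> 0" unfolding Dpq divide_eq_0_iff using nz lz by blast
  have Cc0: "wl_comm l P Q c0 = P p * Q q * D p q c0"
  proof -
    have "wl_comm l P Q c0 = (\<Sum>a\<in>wl_supp_idx P. \<Sum>b\<in>wl_supp_idx Q. P a * Q b * D a b c0)"
      by (simp add: comm_expand D_def)
    also have "\<dots> = (\<Sum>a\<in>wl_supp_idx P. \<Sum>b\<in>wl_supp_idx Q. if a = p then if b = q then P p * Q q * D p q c0 else 0 else 0)"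
    proof (intro sum.cong refl)
      fix a b assume "a \<in> wl_supp_idx P" "b \<in> wl_supp_idx Q"
      then have "P a \<noteq> 0" "Q b \<noteq> 0" by (auto simp: wl_supp_idx_def)
      then show "P a * Q b * D a b c0 = (if a = p then if b = q then P p * Q q * D p q c0 else 0 else 0)"
        using key[of a b c0] by (cases "D a b c0 = 0") auto
    qed
    also have "\<dots> = (\<Sum>a\<in>wl_supp_idx P. if a = p then (\<Sum>b\<in>wl_supp_idx Q. if b = q then P p * Q q * D p q c0 else 0) else 0)"
      by (intro sum.cong) auto
    also have "\<dots> = P p * Q q * D p q c0" using fP fQ Pp Qq by (simp add: wl_supp_idx_def)
    finally show ?thesis .
  qed
  have C0: "wl_comm l P Q c0 \<noteq> 0" using Cc0 Pp Qq Dpq0 by simp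
  have "lead s l (wl_comm l P Q) c0" unfolding lead_def
  proof (intro conjI allI impI)
    show "wl_comm l P Q c0 \<noteq> 0" by (rule C0)
  next
    fix c assume "wl_comm l P Q c \<noteq> 0"
    then have "(\<Sum>a\<in>wl_supp_idx P. \<Sum>b\<in>wl_supp_idx Q. P a * Q b * D a b c) \<noteq> 0"
      by (simp add: comm_expand D_def)
    then obtain a where a: "a \<in> wl_supp_idx P" and sa: "(\<Sum>b\<in>wl_supp_idx Q. P a * Q b * D a b c) \<noteq> 0"
      by (rule sum.not_neutral_contains_not_neutral)
    from sa obtain b where b: "b \<in> wl_supp_idx Q" and "P a * Q b * D a b c \<noteq> 0"
      by (rule sum.not_neutral_contains_not_neutral)
    then have "P a \<noteq> 0" "Q b \<noteq> 0" "D a b c \<noteq> 0" by auto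
    note k = key[OF this]
    show "s * wt l c \<le> s * wt l c0" using k by blast
    assume "wt l c = wt l c0"
    then show "fst c \<le> fst c0" using k by blast
  qed
  then show ?thesis using sp by (simp add: c0_def)
qed
lemma tq_wt: "l > 0 \<Longrightarrow> (of_int i / of_nat l - of_nat j :: rat) = of_int (wt l (i, j)) / of_nat l"
  by (simp add: wt_def field_simps)

lemma div_le_l: "l > 0 \<Longrightarrow> (of_int x / of_nat l \<le> (of_int y / of_nat l :: rat)) \<longleftrightarrow> x \<le> y"
  by (simp add: divide_le_cancel)

lemma div_eq_l: "l > 0 \<Longrightarrow> (of_int x / of_nat l = (of_int y / of_nat l :: rat)) \<longleftrightarrow> x = y"
  by simp

lemma wdir_lead:
  fixes P :: "'k::zero wl"
  assumes l: "l > 0" and p: "lead 1 l P (ip, jp)"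
  shows "wdir l P = (of_int ip / of_nat l, of_nat jp)"
  unfolding wdir_def
proof (rule the_equality)
  have Pp: "P (ip, jp) \<noteq> 0" using p by (simp add: lead_def)
  have L: "\<And>i j. P (i, j) \<noteq> 0 \<Longrightarrow> wt l (i, j) \<le> wt l (ip, jp) \<and> (wt l (i, j) = wt l (ip, jp) \<longrightarrow> i \<le> ip)"
    using p unfolding lead_def by fastforce
  show "(of_int ip / of_nat l, of_nat jp) \<in> Supp l P \<and>
    (\<forall>q\<in>Supp l P. fst q - snd q \<le> fst (of_int ip / of_nat l, of_nat jp) - snd (of_int ip / of_nat l, of_nat jp :: rat)) \<and>
    (\<forall>q\<in>Supp l P. fst q - snd q = fst (of_int ip / of_nat l, of_nat jp) - snd (of_int ip / of_nat l, of_nat jp :: rat) \<longrightarrow>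
       fst q \<le> fst (of_int ip / of_nat l, of_nat jp :: rat))"
  proof (intro conjI ballI impI)
    show "(of_int ip / of_nat l, of_nat jp) \<in> Supp l P" using Pp by (auto simp: Supp_def)
  next
    fix q assume "q \<in> Supp l P"
    then obtain i j where q: "q = (of_int i / of_nat l, of_nat j)" and Pq: "P (i, j) \<noteq> 0"
      by (auto simp: Supp_def)
    show "fst q - snd q \<le> fst (of_int ip / of_nat l, of_nat jp) - snd (of_int ip / of_nat l, of_nat jp :: rat)"
      using L[OF Pq] l by (simp add: q tq_wt div_le_l)
  next
    fix q assume "q \<in> Supp l P"
    then obtain i j where q: "q = (of_int i / of_nat l, of_nat j)" and Pq: "P (i, j) \<noteq> 0"
      by (auto simp: Supp_def)
    assume "fst q - snd q = fst (of_int ip / of_nat l, of_nat jp) - snd (of_int ip / of_nat l, of_nat jp :: rat)"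
    then have "wt l (i, j) = wt l (ip, jp)" using l by (simp add: q tq_wt)
    then show "fst q \<le> fst (of_int ip / of_nat l, of_nat jp :: rat)"
      using L[OF Pq] l by (simp add: q div_le_l)
  qed
next
  fix y assume y: "y \<in> Supp l P \<and>
    (\<forall>q\<in>Supp l P. fst q - snd q \<le> fst y - snd y) \<and>
    (\<forall>q\<in>Supp l P. fst q - snd q = fst y - snd y \<longrightarrow> fst q \<le> fst y)"
  have Pp: "P (ip, jp) \<noteq> 0" using p by (simp add: lead_def)
  have L: "\<And>i j. P (i, j) \<noteq> 0 \<Longrightarrow> wt l (i, j) \<le> wt l (ip, jp) \<and> (wt l (i, j) = wt l (ip, jp) \<longrightarrow> i \<le> ip)"
    using p unfolding lead_def by fastforce
  obtain i j where yq: "y = (of_int i / of_nat l, of_nat j)" and Pq: "P (i, j) \<noteq> 0"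
    using y by (auto simp: Supp_def)
  have pS: "(of_int ip / of_nat l, of_nat jp) \<in> Supp l P" using Pp by (auto simp: Supp_def)
  have "wt l (ip, jp) \<le> wt l (i, j)" using y pS l by (auto simp: yq tq_wt div_le_l)
  then have e: "wt l (i, j) = wt l (ip, jp)" using L[OF Pq] by simp
  then have "ip \<le> i" using y pS l by (auto simp: yq tq_wt div_le_l)
  then have "i = ip" using L[OF Pq] e by simp
  moreover then have "int j * int l = int jp * int l" using e by (simp add: wt_def)
  then have "j = jp" using l by simp
  ultimately show "y = (of_int ip / of_nat l, of_nat jp)" by (simp add: yq)
qed
lemma tq_wt2: "l > 0 \<Longrightarrow> (of_nat j - of_int i / of_nat l :: rat) = of_int (- wt l (i, j)) / of_nat l"
  by (simp add: wt_def field_simps)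

lemma wt_eq_snd: "l > 0 \<Longrightarrow> wt l (i, j) = wt l (i', j') \<Longrightarrow> (j \<le> j' \<longleftrightarrow> i \<le> i')"
proof -
  assume l: "l > 0" and e: "wt l (i, j) = wt l (i', j')"
  then have "(int j - int j') * int l = i - i'" by (simp add: wt_def algebra_simps)
  moreover have "(int j - int j') * int l \<le> 0 \<longleftrightarrow> int j - int j' \<le> 0" using l
    by (simp add: mult_le_0_iff)
  ultimately show ?thesis by linarith
qed

lemma wbar_lead:
  fixes P :: "'k::zero wl"
  assumes l: "l > 0" and p: "lead (-1) l P (ip, jp)"
  shows "wbar l P = (of_int ip / of_nat l, of_nat jp)"
  unfolding wbar_def
proof (rule the_equality)
  have Pp: "P (ip, jp) \<noteq> 0" using p by (simp add: lead_def)
  have L: "\<And>i j. P (i, j) \<noteq> 0 \<Longrightarrow> - wt l (i, j) \<le> - wt l (ip, jp) \<and> (wt l (i, j) = wt l (ip, jp) \<longrightarrow> j \<le> jp)"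
    using p l wt_eq_snd unfolding lead_def by fastforce
  show "(of_int ip / of_nat l, of_nat jp) \<in> Supp l P \<and>
    (\<forall>q\<in>Supp l P. snd q - fst q \<le> snd (of_int ip / of_nat l, of_nat jp) - fst (of_int ip / of_nat l, of_nat jp :: rat)) \<and>
    (\<forall>q\<in>Supp l P. snd q - fst q = snd (of_int ip / of_nat l, of_nat jp) - fst (of_int ip / of_nat l, of_nat jp :: rat) \<longrightarrow>
       snd q \<le> snd (of_int ip / of_nat l, of_nat jp :: rat))"
  proof (intro conjI ballI impI)
    show "(of_int ip / of_nat l, of_nat jp) \<in> Supp l P" using Pp by (auto simp: Supp_def)
  next
    fix q assume "q \<in> Supp l P"
    then obtain i j where q: "q = (of_int i / of_nat l, of_nat j)" and Pq: "P (i, j) \<noteq> 0"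
      by (auto simp: Supp_def)
    show "snd q - fst q \<le> snd (of_int ip / of_nat l, of_nat jp) - fst (of_int ip / of_nat l, of_nat jp :: rat)"
      using L[OF Pq] l by (simp only: q tq_wt2 div_le_l fst_conv snd_conv)
  next
    fix q assume "q \<in> Supp l P"
    then obtain i j where q: "q = (of_int i / of_nat l, of_nat j)" and Pq: "P (i, j) \<noteq> 0"
      by (auto simp: Supp_def)
    assume "snd q - fst q = snd (of_int ip / of_nat l, of_nat jp) - fst (of_int ip / of_nat l, of_nat jp :: rat)"
    then have "wt l (i, j) = wt l (ip, jp)" using l by (simp only: q tq_wt2 div_eq_l fst_conv snd_conv)
    then show "snd q \<le> snd (of_int ip / of_nat l, of_nat jp :: rat)"
      using L[OF Pq] l by (simp add: q)
  qed
next
  fix y assume y: "y \<in> Supp l P \<and>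
    (\<forall>q\<in>Supp l P. snd q - fst q \<le> snd y - fst y) \<and>
    (\<forall>q\<in>Supp l P. snd q - fst q = snd y - fst y \<longrightarrow> snd q \<le> snd y)"
  have Pp: "P (ip, jp) \<noteq> 0" using p by (simp add: lead_def)
  have L: "\<And>i j. P (i, j) \<noteq> 0 \<Longrightarrow> - wt l (i, j) \<le> - wt l (ip, jp) \<and> (wt l (i, j) = wt l (ip, jp) \<longrightarrow> j \<le> jp)"
    using p l wt_eq_snd unfolding lead_def by fastforce
  obtain i j where yq: "y = (of_int i / of_nat l, of_nat j)" and Pq: "P (i, j) \<noteq> 0"
    using y by (auto simp: Supp_def)
  have pS: "(of_int ip / of_nat l, of_nat jp) \<in> Supp l P" using Pp by (auto simp: Supp_def)
  have y1: "snd (of_int ip / of_nat l :: rat, of_nat jp :: rat) - fst (of_int ip / of_nat l :: rat, of_nat jp :: rat) \<le> snd y - fst y"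
    using y pS by blast
  have y2: "snd (of_int ip / of_nat l :: rat, of_nat jp :: rat) - fst (of_int ip / of_nat l :: rat, of_nat jp :: rat) = snd y - fst y
    \<longrightarrow> snd (of_int ip / of_nat l :: rat, of_nat jp :: rat) \<le> snd y"
    using y pS by blast
  have "- wt l (ip, jp) \<le> - wt l (i, j)" using y1 l by (simp only: yq tq_wt2 div_le_l fst_conv snd_conv)
  then have e: "wt l (i, j) = wt l (ip, jp)" using L[OF Pq] by simp
  then have "jp \<le> j" using y2 l by (simp add: yq tq_wt2)
  then have "j = jp" using L[OF Pq] e by simp
  moreover then have "i = ip" using e by (simp add: wt_def)
  ultimately show "y = (of_int ip / of_nat l, of_nat jp)" by (simp add: yq)
qed
lemma not_aligned:
  assumes "\<not> aligned (of_int ip / of_nat l, of_nat jp) (of_int iq / of_nat l, of_nat jq)"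
  shows "int jp * iq \<noteq> int jq * ip"
proof
  assume e: "int jp * iq = int jq * ip"
  have "(of_int ip / of_nat l) * of_nat jq - of_nat jp * (of_int iq / of_nat l) = (of_int (ip * int jq - int jp * iq) / of_nat l :: rat)"
    by (simp add: diff_divide_distrib mult.commute)
  also have "\<dots> = 0" using e by (simp add: mult.commute)
  finally show False using assms by (simp add: aligned_def)
qed

lemma final_eq:
  assumes l: "l > 0" and j: "jp + jq \<ge> 1"
  shows "((of_int (ip + iq - int l) / of_nat l :: rat), (of_nat (jp + jq - 1) :: rat))
     = (fst (of_int ip / of_nat l :: rat, of_nat jp :: rat) + fst (of_int iq / of_nat l :: rat, of_nat jq :: rat) - 1,
        snd (of_int ip / of_nat l :: rat, of_nat jp :: rat) + snd (of_int iq / of_nat l :: rat, of_nat jq :: rat) - 1)"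
  using l j by (simp add: of_nat_diff field_simps)

theorem proposition1p10:
  fixes l :: nat and P Q :: "'k::field_char_0 wl"
  assumes "l > 0"
    and "wl_elem P" and "wl_elem Q"
    and "P \<noteq> (\<lambda>_. 0)" and "Q \<noteq> (\<lambda>_. 0)"
  shows "(\<not> aligned (wdir l P) (wdir l Q) \<longrightarrow>
           wl_comm l P Q \<noteq> (\<lambda>_. 0) \<and>
           wdir l (wl_comm l P Q) = (fst (wdir l P) + fst (wdir l Q) - 1,
                                      snd (wdir l P) + snd (wdir l Q) - 1))
       \<and> (\<not> aligned (wbar l P) (wbar l Q) \<longrightarrow>
           wl_comm l P Q \<noteq> (\<lambda>_. 0) \<and>
           wbar l (wl_comm l P Q) = (fst (wbar l P) + fst (wbar l Q) - 1,
                                      snd (wbar l P) + snd (wbar l Q) - 1))"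
proof -
  note l = assms(1)
  have fP: "finite (wl_supp_idx P)" and fQ: "finite (wl_supp_idx Q)"
    using assms(2,3) by (auto simp: wl_elem_def wl_supp_idx_def)
  have fP': "finite {k. P k \<noteq> 0}" and fQ': "finite {k. Q k \<noteq> 0}"
    using assms(2,3) by (auto simp: wl_elem_def)
  have part: "(\<not> aligned (wx l P) (wx l Q) \<longrightarrow>
           wl_comm l P Q \<noteq> (\<lambda>_. 0) \<and>
           wx l (wl_comm l P Q) = (fst (wx l P) + fst (wx l Q) - 1,
                                      snd (wx l P) + snd (wx l Q) - 1))"
    if s: "s = 1 \<or> s = -1"
      and wx: "\<And>(R :: 'k wl) i j. lead s l R (i, j) \<Longrightarrow> wx l R = (of_int i / of_nat l, of_nat j)"
    for s and wx :: "nat \<Rightarrow> 'k wl \<Rightarrow> rat \<times> rat"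
  proof
    assume na: "\<not> aligned (wx l P) (wx l Q)"
    obtain ip jp where p: "lead s l P (ip, jp)" using exists_lead[OF fP' assms(4), where s=s and l=l] by auto
    obtain iq jq where q: "lead s l Q (iq, jq)" using exists_lead[OF fQ' assms(5), where s=s and l=l] by auto
    have na': "int jp * iq \<noteq> int jq * ip"
      using na wx[OF p] wx[OF q] not_aligned by metis
    have c: "jp + jq \<ge> 1 \<and> lead s l (wl_comm l P Q) (ip + iq - int l, jp + jq - 1)"
      using comm_lead[OF l s fP fQ p q] na' by simp
    have "wl_comm l P Q (ip + iq - int l, jp + jq - 1) \<noteq> 0" using c by (simp add: lead_def)
    then have "wl_comm l P Q \<noteq> (\<lambda>_. 0)" by auto
    moreover have "wx l (wl_comm l P Q) = (fst (wx l P) + fst (wx l Q) - 1, snd (wx l P) + snd (wx l Q) - 1)"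
    proof -
      have "wx l (wl_comm l P Q) = (of_int (ip + iq - int l) / of_nat l, of_nat (jp + jq - 1))"
        using c wx by blast
      also have "\<dots> = (fst (of_int ip / of_nat l :: rat, of_nat jp :: rat) + fst (of_int iq / of_nat l :: rat, of_nat jq :: rat) - 1,
        snd (of_int ip / of_nat l :: rat, of_nat jp :: rat) + snd (of_int iq / of_nat l :: rat, of_nat jq :: rat) - 1)"
        using final_eq[OF l] c by blast
      finally show ?thesis using wx[OF p] wx[OF q] by simp
    qed
    ultimately show "wl_comm l P Q \<noteq> (\<lambda>_. 0) \<and>
           wx l (wl_comm l P Q) = (fst (wx l P) + fst (wx l Q) - 1, snd (wx l P) + snd (wx l Q) - 1)" by blast
  qed
  show ?thesis
  proof
    show "\<not> aligned (wdir l P) (wdir l Q) \<longrightarrow>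
           wl_comm l P Q \<noteq> (\<lambda>_. 0) \<and>
           wdir l (wl_comm l P Q) = (fst (wdir l P) + fst (wdir l Q) - 1,
                                      snd (wdir l P) + snd (wdir l Q) - 1)"
      by (rule part[of 1 wdir]) (auto intro: wdir_lead[OF l])
    show "\<not> aligned (wbar l P) (wbar l Q) \<longrightarrow>
           wl_comm l P Q \<noteq> (\<lambda>_. 0) \<and>
           wbar l (wl_comm l P Q) = (fst (wbar l P) + fst (wbar l Q) - 1,
                                      snd (wbar l P) + snd (wbar l Q) - 1)"
      by (rule part[of "-1" wbar]) (auto intro: wbar_lead[OF l])
  qed
qed
end
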